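(* Let $x,y$ be fixed real (or complex) numbers. For each such $x$ let $\kappa_x:\mathbb{Z}_{>0}\to\mathbb{C}$ be the recursive divisor function defined by $$\kappa_x(n) = n^x + \sum_{d \mid n,\ d<n} \kappa_x(d)\qquad (n\ge 1).$$ Then the following identities of arithmetic functions hold: 1. $\kappa_x * \sigma_y = \kappa_y * \sigma_x$; 2. $\kappa_x = (\mathrm{id}_x + \mathbf{1} * \kappa_x)/2$; 3. $\kappa_x = \dfrac{\mathrm{id}_x}{2} + \dfrac{\mathbf{1}*\mathrm{id}_x}{2^2} + \dfrac{\mathbf{1}*\mathbf{1}*\mathrm{id}_x}{2^3} + \cdots$, i.e. $\kappa_x(n)=\sum_{k\ge 0} 2^{-(k+1)}(\mathbf{1}^{*k}*\mathrm{id}_x)(n)$ for every $n$, where $\mathbf{1}^{*k}$ is the $k$-fold Dirichlet convolution power of $\mathbf{1}$ (with $\mathbf{1}^{*0}=\varepsilon$); 4. $\kappa_x = J_x * \kappa_0$; 5. $\kappa_x^{-1} = J_x^{-1} * (2\mu - \varepsilon)$; 6. $\sigma_x = \kappa_x * (2\cdot\mathbf{1} - d)$.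
   Context: Arithmetic functions are functions $\mathbb{Z}_{>0}\to\mathbb{C}$, added and scaled pointwise. $f*g$ denotes Dirichlet convolution, $(f*g)(n)=\sum_{d\mid n} f(d)g(n/d)$, and $f^{-1}$ denotes the Dirichlet inverse of $f$ (which exists when $f(1)\neq 0$). Notation: $\varepsilon(n)=1$ if $n=1$ and $0$ otherwise; $\mathbf{1}(n)=1$ for all $n$; $\mathrm{id}_x(n)=n^x$; $\mu$ is the Möbius function; $\sigma_x(n)=\sum_{d\mid n} d^x$; $d(n)=\sigma_0(n)$ is the number of divisors of $n$; $J_x=\mu*\mathrm{id}_x$ is Jordan's totient function (so $J_0=\varepsilon$ and $J_1=\phi$); $\kappa_0$ is $\kappa_x$ with $x=0$. *)

theory Defs
  imports "HOL-Analysis.Complex_Transcendental" "HOL-Computational_Algebra.Squarefree"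
begin

text \<open>Arithmetic functions are modelled as functions nat => complex; only the
values at positive arguments are meaningful.\<close>

definition dconv :: "(nat \<Rightarrow> complex) \<Rightarrow> (nat \<Rightarrow> complex) \<Rightarrow> nat \<Rightarrow> complex" where
  "dconv f g n = (\<Sum>d\<in>{d. d dvd n}. f d * g (n div d))"

definition eps :: "nat \<Rightarrow> complex" where
  "eps n = (if n = 1 then 1 else 0)"

definition one_fn :: "nat \<Rightarrow> complex" where
  "one_fn n = 1"

definition id_pow :: "complex \<Rightarrow> nat \<Rightarrow> complex" where
  "id_pow x n = (of_nat n :: complex) powr x"

definition mu :: "nat \<Rightarrow> complex" where
  "mu n = (if squarefree n then (-1) ^ card (prime_factors n) else 0)"

definition sigma :: "complex \<Rightarrow> nat \<Rightarrow> complex" where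
  "sigma x n = (\<Sum>d\<in>{d. d dvd n}. (of_nat d :: complex) powr x)"

definition jordan :: "complex \<Rightarrow> nat \<Rightarrow> complex" where
  "jordan x = dconv mu (id_pow x)"

fun dpow :: "(nat \<Rightarrow> complex) \<Rightarrow> nat \<Rightarrow> nat \<Rightarrow> complex" where
  "dpow f 0 = eps"
| "dpow f (Suc k) = dconv f (dpow f k)"

definition dinv :: "(nat \<Rightarrow> complex) \<Rightarrow> nat \<Rightarrow> complex" where
  "dinv f = (THE g. (\<forall>n>0. dconv f g n = eps n) \<and> g 0 = 0)"

function kappa :: "complex \<Rightarrow> nat \<Rightarrow> complex" where
  "kappa x n = (if n = 0 then 0 else
     (of_nat n :: complex) powr x + (\<Sum>d\<in>{d. d dvd n \<and> d < n}. kappa x d))"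
  by pat_completeness auto
termination
  by (relation "measure snd") auto

declare kappa.simps [simp del]

end

theory Submission
  imports Defs
begin

lemma fin_div: "n > 0 \<Longrightarrow> finite {d::nat. d dvd n}"
  by (simp add: finite_divisors_nat)

lemma fin_pairs: "n > 0 \<Longrightarrow> finite {p::nat\<times>nat. fst p * snd p = n}"
proof -
  assume n: "n > 0"
  have "{p::nat\<times>nat. fst p * snd p = n} \<subseteq> {..n} \<times> {..n}"
  proof
    fix p :: "nat\<times>nat" assume "p \<in> {p::nat\<times>nat. fst p * snd p = n}"
    then have "fst p * snd p = n" by simp
    then have "fst p \<le> n \<and> snd p \<le> n" using n by (metis dvd_imp_le dvd_triv_left dvd_triv_right)
    then show "p \<in> {..n} \<times> {..n}" by (cases p) auto
  qed
  thus ?thesis by (rule finite_subset) auto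
qed

lemma dconv_pairs:
  assumes "n > 0"
  shows "dconv f g n = (\<Sum>p\<in>{p. fst p * snd p = n}. f (fst p) * g (snd p))"
  unfolding dconv_def
  by (rule sum.reindex_bij_witness[where i=fst and j="\<lambda>d. (d, n div d)"])
     (use assms in auto)

lemma dconv_comm: "dconv f g n = dconv g f n"
proof (cases "n = 0")
  case True
  have "infinite {d::nat. d dvd 0}" by simp
  then show ?thesis using True by (simp add: dconv_def)
next
  case False
  then show ?thesis
    apply (subst (1 2) dconv_pairs) using False apply simp_all
    by (rule sum.reindex_bij_witness[where i="\<lambda>(a,b). (b,a)" and j="\<lambda>(a,b). (b,a)"])
       (auto simp: mult.commute)
qed

lemma dconv_comm_fun: "dconv f g = dconv g f"
  by (rule ext, rule dconv_comm)

lemma dconv_assoc: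
  assumes n: "n > 0"
  shows "dconv (dconv f g) h n = dconv f (dconv g h) n"
proof -
  let ?T = "{t::nat\<times>nat\<times>nat. fst t * fst (snd t) * snd (snd t) = n}"
  have fin: "finite ?T"
  proof -
    have "?T \<subseteq> {..n} \<times> {..n} \<times> {..n}"
    proof
      fix t :: "nat\<times>nat\<times>nat" assume "t \<in> ?T"
      then obtain a b c where t: "t = (a,b,c)" "a*b*c = n" by (cases t) auto
      then have "a \<le> n \<and> b \<le> n \<and> c \<le> n" using n
        by (metis dvd_imp_le dvd_triv_left dvd_triv_right mult.assoc mult.commute)
      then show "t \<in> {..n} \<times> {..n} \<times> {..n}" using t by auto
    qed
    thus ?thesis by (rule finite_subset) auto
  qed
  have "dconv (dconv f g) h n = (\<Sum>p\<in>{p. fst p * snd p = n}. dconv f g (fst p) * h (snd p))"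
    by (rule dconv_pairs[OF n])
  also have "\<dots> = (\<Sum>p\<in>{p. fst p * snd p = n}. \<Sum>q\<in>{q. fst q * snd q = fst p}. f (fst q) * g (snd q) * h (snd p))"
    apply (rule sum.cong, simp)
    subgoal for p proof -
      assume "p \<in> {p. fst p * snd p = n}"
      then have "fst p > 0" using n by (cases "fst p = 0") auto
      then show ?thesis by (simp add: dconv_pairs sum_distrib_right)
    qed done
  also have "\<dots> = (\<Sum>(p,q)\<in>(SIGMA p:{p. fst p * snd p = n}. {q. fst q * snd q = fst p}). f (fst q) * g (snd q) * h (snd p))"
    apply (subst sum.Sigma) apply (rule fin_pairs[OF n]) apply (intro ballI fin_pairs) using n apply (auto intro: gr0I) done
  also have "\<dots> = (\<Sum>t\<in>?T. f (fst t) * g (fst (snd t)) * h (snd (snd t)))"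
    by (rule sum.reindex_bij_witness[where i="\<lambda>(a,b,c). ((a*b,c),(a,b))" and j="\<lambda>((d,c),(a,b)). (a,b,c)"]) auto
  also have "\<dots> = (\<Sum>(p,q)\<in>(SIGMA p:{p. fst p * snd p = n}. {q. fst q * snd q = snd p}). f (fst p) * (g (fst q) * h (snd q)))"
    by (rule sum.reindex_bij_witness[where j="\<lambda>(a,b,c). ((a,b*c),(b,c))" and i="\<lambda>((a,d),(b,c)). (a,b,c)"]) (auto simp: mult.assoc)
  also have "\<dots> = (\<Sum>p\<in>{p. fst p * snd p = n}. \<Sum>q\<in>{q. fst q * snd q = snd p}. f (fst p) * (g (fst q) * h (snd q)))"
    apply (subst sum.Sigma) apply (rule fin_pairs[OF n]) apply (intro ballI fin_pairs) using n apply (auto intro: gr0I) done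
  also have "\<dots> = (\<Sum>p\<in>{p. fst p * snd p = n}. f (fst p) * dconv g h (snd p))"
    apply (rule sum.cong, simp)
    subgoal for p proof -
      assume "p \<in> {p. fst p * snd p = n}"
      then have "snd p > 0" using n by (cases "snd p = 0") auto
      then show ?thesis by (simp add: dconv_pairs sum_distrib_left)
    qed done
  also have "\<dots> = dconv f (dconv g h) n" by (rule dconv_pairs[OF n, symmetric])
  finally show ?thesis .
qed

lemma dconv_cong:
  assumes "n > 0" "\<And>m. m > 0 \<Longrightarrow> f m = f' m" "\<And>m. m > 0 \<Longrightarrow> g m = g' m"
  shows "dconv f g n = dconv f' g' n"
  unfolding dconv_def
proof (rule sum.cong, simp)
  fix d assume "d \<in> {d. d dvd n}"
  then have "d > 0" "n div d > 0" using assms(1)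
    by (auto intro!: gr0I simp: dvd_div_eq_0_iff)
  then show "f d * g (n div d) = f' d * g' (n div d)" using assms by simp
qed

lemma divs_split: "n > 0 \<Longrightarrow> {d::nat. d dvd n} = insert n {d. d dvd n \<and> d < n}"
  by (auto dest: dvd_imp_le)

lemma dconv_eps_right: "n > 0 \<Longrightarrow> dconv f eps n = f n"
proof -
  assume n: "n > 0"
  have "dconv f eps n = (\<Sum>d\<in>{d. d dvd n}. if d = n then f n else 0)"
    unfolding dconv_def eps_def
    apply (rule sum.cong, simp)
    using n by (auto elim!: dvdE)
  also have "\<dots> = f n" using n by (simp add: fin_div)
  finally show ?thesis .
qed

lemma dconv_eps_left: "n > 0 \<Longrightarrow> dconv eps f n = f n"
  by (metis dconv_comm dconv_eps_right)

definition T :: "nat \<Rightarrow> complex" where "T m = 2 * eps m - one_fn m"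

lemma T_expand:
  assumes n: "n > 0"
  shows "dconv T a n = a n - (\<Sum>d\<in>{d. d dvd n \<and> d < n}. a d)"
proof -
  have fin: "finite {d. d dvd n \<and> d < n}" by (rule finite_subset[OF _ fin_div[OF n]]) auto
  have "dconv T a n = dconv a T n" by (rule dconv_comm)
  also have "\<dots> = (\<Sum>d\<in>{d. d dvd n}. 2 * (a d * eps (n div d)) - a d)"
    unfolding dconv_def T_def one_fn_def by (simp add: algebra_simps)
  also have "\<dots> = 2 * dconv a eps n - (\<Sum>d\<in>{d. d dvd n}. a d)"
    unfolding dconv_def by (simp add: sum_subtractf sum_distrib_left)
  also have "\<dots> = 2 * a n - (a n + (\<Sum>d\<in>{d. d dvd n \<and> d < n}. a d))"
    using n fin by (simp add: dconv_eps_right divs_split[OF n])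
  finally show ?thesis by simp
qed

lemma kappa_T: "n > 0 \<Longrightarrow> dconv T (kappa x) n = id_pow x n"
  by (simp add: T_expand id_pow_def kappa.simps[of x n])

lemma T_cancel:
  assumes "\<And>n. n > 0 \<Longrightarrow> dconv T a n = dconv T b n"
  shows "n > 0 \<Longrightarrow> a n = b n"
proof (induction n rule: less_induct)
  case (less n)
  have "(\<Sum>d\<in>{d. d dvd n \<and> d < n}. a d) = (\<Sum>d\<in>{d. d dvd n \<and> d < n}. b d)"
    apply (rule sum.cong, simp)
    using less by (auto intro!: less.IH intro: gr0I)
  then show ?case using assms[OF less.prems] by (simp add: T_expand less.prems)
qed

lemma kappa_charact:
  assumes "\<And>n. n > 0 \<Longrightarrow> dconv T g n = id_pow x n"
  shows "n > 0 \<Longrightarrow> g n = kappa x n"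
  by (rule T_cancel) (simp_all add: assms kappa_T)

lemma sigma_conv: "n > 0 \<Longrightarrow> sigma x n = dconv (id_pow x) one_fn n"
  by (simp add: sigma_def dconv_def id_pow_def one_fn_def)

lemma dinv_unique:
  assumes "\<And>n. n > 0 \<Longrightarrow> dconv f g n = eps n" "g 0 = 0"
  shows "dinv f = g"
  unfolding dinv_def
proof (rule the_equality)
  show "(\<forall>n>0. dconv f g n = eps n) \<and> g 0 = 0" using assms by auto
next
  fix g' assume g': "(\<forall>n>0. dconv f g' n = eps n) \<and> g' 0 = 0"
  show "g' = g"
  proof
    fix n show "g' n = g n"
    proof (cases "n = 0")
      case True then show ?thesis using g' assms by simp
    next
      case False
      then have n: "n > 0" by simp
      have "g' n = dconv g' eps n" using n by (simp add: dconv_eps_right)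
      also have "\<dots> = dconv g' (dconv f g) n" by (rule dconv_cong) (use n assms in auto)
      also have "\<dots> = dconv (dconv g' f) g n" using dconv_assoc[OF n] by simp
      also have "\<dots> = dconv (dconv f g') g n" by (subst dconv_comm_fun[of g' f]) (rule refl)
      also have "\<dots> = dconv eps g n" by (rule dconv_cong) (use n g' in auto)
      also have "\<dots> = g n" using n by (simp add: dconv_eps_left)
      finally show ?thesis .
    qed
  qed
qed

lemma pf_prod:
  assumes "S \<subseteq> prime_factors (n::nat)"
  shows "prime_factorization (\<Prod>S) = mset_set S"
proof -
  have fin: "finite S" using assms finite_subset by blast
  have "\<Prod>S = prod_mset (mset_set S)" by (simp add: prod_unfold_prod_mset)
  moreover have "prime_factorization (prod_mset (mset_set S)) = mset_set S"
    apply (rule prime_factorization_prod_mset_primes)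
    using assms fin by auto
  ultimately show ?thesis by simp
qed

lemma prod_subset_props:
  assumes "S \<subseteq> prime_factors (n::nat)" "n > 0"
  shows "prime_factors (\<Prod>S) = S" "\<Prod>S dvd n" "squarefree (\<Prod>S)"
proof -
  have fin: "finite S" using assms finite_subset by blast
  have pr: "\<And>p. p \<in> S \<Longrightarrow> prime p" using assms by auto
  have nz: "\<Prod>S \<noteq> 0" using pr by (metis fin not_prime_0 prod_zero_iff)
  show "prime_factors (\<Prod>S) = S" using pf_prod[OF assms(1)] fin by simp
  show "\<Prod>S dvd n"
  proof (rule prime_factorization_subset_imp_dvd[OF nz])
    show "prime_factorization (\<Prod>S) \<subseteq># prime_factorization n"
      unfolding pf_prod[OF assms(1)] subseteq_mset_def
    proof
      fix p show "count (mset_set S) p \<le> count (prime_factorization n) p"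
        using assms(1) fin by (cases "p \<in> S") auto
    qed
  qed
  show "squarefree (\<Prod>S)"
    unfolding squarefree_factorial_semiring''[OF nz]
  proof (intro allI impI)
    fix p :: nat assume "prime p"
    then have "multiplicity p (\<Prod>S) = count (mset_set S) p"
      by (simp add: count_prime_factorization_prime[symmetric] pf_prod[OF assms(1)])
    also have "\<dots> \<le> 1" using fin by (cases "p \<in> S") auto
    finally show "multiplicity p (\<Prod>S) \<le> 1" .
  qed
qed

lemma sqf_props:
  assumes "squarefree (d::nat)" "d dvd n" "n > 0"
  shows "prime_factors d \<subseteq> prime_factors n" "\<Prod>(prime_factors d) = d"
proof -
  have d0: "d \<noteq> 0" using assms by auto
  show "prime_factors d \<subseteq> prime_factors n"
    using assms d0 by (auto simp: in_prime_factors_iff intro: dvd_trans)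
  have "\<forall>p\<in>prime_factors d. multiplicity p d = 1"
    using assms(1) squarefree_factorial_semiring'[OF d0] by blast
  then have "(\<Prod>p\<in>prime_factors d. p ^ multiplicity p d) = (\<Prod>p\<in>prime_factors d. p)"
    by (intro prod.cong) auto
  then show "\<Prod>(prime_factors d) = d"
    using prod_prime_factors[OF d0] by simp
qed

lemma alt_pow_sum: "finite P \<Longrightarrow> (\<Sum>S\<in>Pow P. (-1::complex) ^ card S) = (if P = {} then 1 else 0)"
proof (induction P rule: finite_induct)
  case empty then show ?case by simp
next
  case (insert a P)
  have "(\<Sum>S\<in>Pow (insert a P). (-1::complex) ^ card S)
      = (\<Sum>S\<in>Pow P. (-1::complex) ^ card S) + (\<Sum>S\<in>insert a ` Pow P. (-1::complex) ^ card S)"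
    unfolding Pow_insert
    apply (rule sum.union_disjoint)
    using insert by auto
  also have "(\<Sum>S\<in>insert a ` Pow P. (-1::complex) ^ card S) = (\<Sum>S\<in>Pow P. (-1::complex) ^ card (insert a S))"
  proof -
    have "inj_on (insert a) (Pow P)" unfolding inj_on_def using insert.hyps(2) by (metis PowD Set.set_insert insert_ident subsetD)
    then show ?thesis by (simp add: sum.reindex)
  qed
  also have "\<dots> = - (\<Sum>S\<in>Pow P. (-1::complex) ^ card S)"
    unfolding sum_negf[symmetric]
    apply (rule sum.cong, simp)
    using insert by (subst card_insert_disjoint) (auto dest: finite_subset)
  finally show ?case by simp
qed

lemma mu_sum: "n > 0 \<Longrightarrow> dconv one_fn mu n = eps n"
proof -
  assume n: "n > 0"
  have fin: "finite {d. d dvd n \<and> squarefree d}" by (rule finite_subset[OF _ fin_div[OF n]]) auto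
  have "dconv one_fn mu n = (\<Sum>d\<in>{d. d dvd n}. mu d)"
    by (subst dconv_comm) (simp add: dconv_def one_fn_def)
  also have "\<dots> = (\<Sum>d\<in>{d. d dvd n \<and> squarefree d}. mu d)"
    apply (rule sum.mono_neutral_right)
    using n by (auto simp: fin_div mu_def)
  also have "\<dots> = (\<Sum>d\<in>{d. d dvd n \<and> squarefree d}. (-1) ^ card (prime_factors d))"
    by (simp add: mu_def)
  also have "\<dots> = (\<Sum>S\<in>Pow (prime_factors n). (-1) ^ card S)"
    apply (rule sum.reindex_bij_witness[where i="\<lambda>S. \<Prod>S" and j="prime_factors"])
    using n prod_subset_props[of _ n] sqf_props[of _ n] by auto
  also have "\<dots> = eps n"
    using n by (subst alt_pow_sum) (auto simp: eps_def prime_factorization_empty_iff)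
  finally show ?thesis .
qed

lemma dconv_cong_r: "n > 0 \<Longrightarrow> (\<And>m. m > 0 \<Longrightarrow> g m = g' m) \<Longrightarrow> dconv f g n = dconv f g' n"
  by (rule dconv_cong) auto

lemma dconv_cong_l: "n > 0 \<Longrightarrow> (\<And>m. m > 0 \<Longrightarrow> f m = f' m) \<Longrightarrow> dconv f g n = dconv f' g n"
  by (rule dconv_cong) auto

lemma id_pow_mult: "id_pow x (a * b) = id_pow x a * id_pow x b"
  unfolding id_pow_def of_nat_mult by (rule powr_times_real) auto

lemma id_pow_0: "m > 0 \<Longrightarrow> id_pow 0 m = one_fn m"
  by (simp add: id_pow_def one_fn_def)

lemma id_inv: "n > 0 \<Longrightarrow> dconv (id_pow x) (\<lambda>m. mu m * id_pow x m) n = eps n"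
proof -
  assume n: "n > 0"
  have "dconv (id_pow x) (\<lambda>m. mu m * id_pow x m) n = (\<Sum>d\<in>{d. d dvd n}. id_pow x n * mu (n div d))"
    unfolding dconv_def
    apply (rule sum.cong, simp)
    by (auto elim!: dvdE simp: id_pow_mult mu_def)
  also have "\<dots> = id_pow x n * dconv one_fn mu n"
    by (simp add: dconv_def one_fn_def sum_distrib_left)
  also have "\<dots> = eps n" using n by (simp add: mu_sum eps_def id_pow_def)
  finally show ?thesis .
qed

lemma dconv_T_right: "n > 0 \<Longrightarrow> dconv f T n = 2 * f n - dconv f one_fn n"
proof -
  assume n: "n > 0"
  have "dconv f T n = 2 * dconv f eps n - dconv f one_fn n"
    unfolding dconv_def T_def one_fn_def by (simp add: algebra_simps sum_subtractf sum_distrib_left)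
  then show ?thesis using dconv_eps_right[OF n] by simp
qed

lemma item2: "n > 0 \<Longrightarrow> kappa x n = (id_pow x n + dconv one_fn (kappa x) n) / 2"
proof -
  assume n: "n > 0"
  have "dconv T (kappa x) n = id_pow x n" using n by (rule kappa_T)
  moreover have "dconv T (kappa x) n = 2 * kappa x n - dconv one_fn (kappa x) n"
    using n by (simp add: dconv_comm[of T] dconv_T_right dconv_comm[of one_fn])
  ultimately show ?thesis by (simp add: field_simps)
qed

lemma item4: "n > 0 \<Longrightarrow> kappa x n = dconv (jordan x) (kappa 0) n"
proof (rule kappa_charact[symmetric])
  fix n :: nat assume n: "n > 0"
  have "dconv T (dconv (jordan x) (kappa 0)) n = dconv (dconv (jordan x) (kappa 0)) T n"
    by (rule dconv_comm)
  also have "\<dots> = dconv (jordan x) (dconv (kappa 0) T) n" by (rule dconv_assoc[OF n])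
  also have "\<dots> = dconv (jordan x) one_fn n"
    apply (rule dconv_cong_r[OF n])
    by (subst dconv_comm) (simp add: kappa_T id_pow_0)
  also have "\<dots> = dconv (dconv (id_pow x) mu) one_fn n"
    by (simp add: jordan_def dconv_comm_fun[of mu])
  also have "\<dots> = dconv (id_pow x) (dconv mu one_fn) n" by (rule dconv_assoc[OF n])
  also have "\<dots> = dconv (id_pow x) eps n"
    apply (rule dconv_cong_r[OF n])
    by (subst dconv_comm) (simp add: mu_sum)
  also have "\<dots> = id_pow x n" using n by (rule dconv_eps_right)
  finally show "dconv T (dconv (jordan x) (kappa 0)) n = id_pow x n" .
qed

lemma item6: "n > 0 \<Longrightarrow> sigma x n = dconv (kappa x) (\<lambda>m. 2 * one_fn m - sigma 0 m) n"
proof -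
  assume n: "n > 0"
  have "dconv (kappa x) (\<lambda>m. 2 * one_fn m - sigma 0 m) n = dconv (kappa x) (dconv T one_fn) n"
  proof (rule dconv_cong_r[OF n])
    fix m :: nat assume m: "m > 0"
    have "dconv (id_pow 0) one_fn m = dconv one_fn one_fn m"
      by (rule dconv_cong_l[OF m]) (simp add: id_pow_0)
    then show "2 * one_fn m - sigma 0 m = dconv T one_fn m"
      using m by (subst dconv_comm) (simp add: dconv_T_right sigma_conv)
  qed
  also have "\<dots> = dconv (dconv (kappa x) T) one_fn n" by (rule dconv_assoc[OF n, symmetric])
  also have "\<dots> = dconv (id_pow x) one_fn n"
    apply (rule dconv_cong_l[OF n])
    by (subst dconv_comm) (simp add: kappa_T)
  also have "\<dots> = sigma x n" using n by (simp add: sigma_conv)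
  finally show ?thesis by simp
qed

lemma item1: "n > 0 \<Longrightarrow> dconv (kappa x) (sigma y) n = dconv (kappa y) (sigma x) n"
proof (rule T_cancel)
  have key: "dconv T (dconv (kappa x) (sigma y)) n = dconv (dconv (id_pow x) (id_pow y)) one_fn n"
    if n: "n > 0" for x y and n :: nat
  proof -
    have "dconv T (dconv (kappa x) (sigma y)) n = dconv (dconv T (kappa x)) (sigma y) n"
      by (rule dconv_assoc[OF n, symmetric])
    also have "\<dots> = dconv (id_pow x) (dconv (id_pow y) one_fn) n"
      apply (rule dconv_cong[OF n]) by (simp_all add: kappa_T sigma_conv)
    also have "\<dots> = dconv (dconv (id_pow x) (id_pow y)) one_fn n" by (rule dconv_assoc[OF n, symmetric])
    finally show ?thesis .
  qed
  fix n :: nat assume "n > 0"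
  then show "dconv T (dconv (kappa x) (sigma y)) n = dconv T (dconv (kappa y) (sigma x)) n"
    by (simp add: key dconv_comm_fun[of "id_pow y"])
qed

definition IDinv :: "complex \<Rightarrow> nat \<Rightarrow> complex" where "IDinv x m = mu m * id_pow x m"
lemma IDinv_eq: "IDinv x = (\<lambda>m. mu m * id_pow x m)"
  by (rule ext) (simp add: IDinv_def)

definition Jinv :: "complex \<Rightarrow> nat \<Rightarrow> complex" where
  "Jinv x m = (if m = 0 then 0 else dconv one_fn (IDinv x) m)"

lemma one_id_IDinv: "m > 0 \<Longrightarrow> dconv (id_pow x) (dconv one_fn (IDinv x)) m = one_fn m"
proof -
  assume m: "m > 0"
  have "dconv (id_pow x) (dconv one_fn (IDinv x)) m = dconv (dconv (id_pow x) one_fn) (IDinv x) m"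
    by (rule dconv_assoc[OF m, symmetric])
  also have "\<dots> = dconv one_fn (dconv (id_pow x) (IDinv x)) m"
    by (simp add: dconv_comm_fun[of "id_pow x"] dconv_assoc[OF m])
  also have "\<dots> = dconv one_fn eps m"
    by (rule dconv_cong_r[OF m]) (simp add: id_inv IDinv_eq)
  also have "\<dots> = one_fn m" using m by (rule dconv_eps_right)
  finally show ?thesis .
qed

lemma dinv_jordan: "dinv (jordan x) = Jinv x"
proof (rule dinv_unique)
  fix n :: nat assume n: "n > 0"
  have "dconv (jordan x) (Jinv x) n = dconv (dconv mu (id_pow x)) (dconv one_fn (IDinv x)) n"
    unfolding jordan_def by (rule dconv_cong_r[OF n]) (simp add: Jinv_def)
  also have "\<dots> = dconv mu (dconv (id_pow x) (dconv one_fn (IDinv x))) n"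
    by (rule dconv_assoc[OF n])
  also have "\<dots> = dconv mu one_fn n"
    by (rule dconv_cong_r[OF n]) (simp add: one_id_IDinv)
  also have "\<dots> = eps n" using n by (simp add: dconv_comm[of mu] mu_sum)
  finally show "dconv (jordan x) (Jinv x) n = eps n" .
qed (simp add: Jinv_def)

lemma mu_T: "m > 0 \<Longrightarrow> dconv mu T m = 2 * mu m - eps m"
  by (metis dconv_T_right dconv_comm mu_sum)

lemma Jinv_U: "m > 0 \<Longrightarrow> dconv (Jinv x) (\<lambda>m. 2 * mu m - eps m) m = dconv (IDinv x) T m"
proof -
  assume m: "m > 0"
  have "dconv (Jinv x) (\<lambda>m. 2 * mu m - eps m) m = dconv (dconv one_fn (IDinv x)) (dconv mu T) m"
    by (rule dconv_cong[OF m]) (simp_all add: Jinv_def mu_T)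
  also have "\<dots> = dconv (IDinv x) (dconv one_fn (dconv mu T)) m"
    by (simp add: dconv_comm_fun[of one_fn] dconv_assoc[OF m])
  also have "\<dots> = dconv (IDinv x) T m"
  proof (rule dconv_cong_r[OF m])
    fix k :: nat assume k: "k > 0"
    have "dconv one_fn (dconv mu T) k = dconv (dconv one_fn mu) T k" by (rule dconv_assoc[OF k, symmetric])
    also have "\<dots> = dconv eps T k" by (rule dconv_cong_l[OF k]) (simp add: mu_sum)
    also have "\<dots> = T k" using k by (rule dconv_eps_left)
    finally show "dconv one_fn (dconv mu T) k = T k" .
  qed
  finally show ?thesis .
qed

lemma item5: "n > 0 \<Longrightarrow> dinv (kappa x) n = dconv (dinv (jordan x)) (\<lambda>m. 2 * mu m - eps m) n"
proof -
  assume n0: "n > 0"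
  define K where "K = (\<lambda>m. if m = 0 then 0 else dconv (Jinv x) (\<lambda>m. 2 * mu m - eps m) m)"
  have "dinv (kappa x) = K"
  proof (rule dinv_unique)
    fix n :: nat assume n: "n > 0"
    have "dconv (kappa x) K n = dconv (kappa x) (dconv T (IDinv x)) n"
      by (rule dconv_cong_r[OF n]) (simp add: K_def Jinv_U dconv_comm[of "IDinv x"])
    also have "\<dots> = dconv (dconv (kappa x) T) (IDinv x) n" by (rule dconv_assoc[OF n, symmetric])
    also have "\<dots> = dconv (id_pow x) (IDinv x) n"
      by (rule dconv_cong_l[OF n]) (simp add: dconv_comm[of "kappa x"] kappa_T)
    also have "\<dots> = eps n" using n by (simp add: id_inv IDinv_eq)
    finally show "dconv (kappa x) K n = eps n" .
  qed (simp add: K_def)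
  then show ?thesis using n0 by (simp add: K_def dinv_jordan)
qed

lemma a_Suc:
  assumes m: "m > 0"
  shows "dconv (dpow one_fn (Suc k)) (id_pow x) m
       = dconv (dpow one_fn k) (id_pow x) m + (\<Sum>d\<in>{d. d dvd m \<and> d < m}. dconv (dpow one_fn k) (id_pow x) d)"
proof -
  have fin: "finite {d. d dvd m \<and> d < m}" by (rule finite_subset[OF _ fin_div[OF m]]) auto
  have "dconv (dpow one_fn (Suc k)) (id_pow x) m = dconv one_fn (dconv (dpow one_fn k) (id_pow x)) m"
    by (simp add: dconv_assoc[OF m])
  also have "\<dots> = (\<Sum>d\<in>{d. d dvd m}. dconv (dpow one_fn k) (id_pow x) d)"
    by (subst dconv_comm) (simp add: dconv_def one_fn_def)
  also have "\<dots> = dconv (dpow one_fn k) (id_pow x) m + (\<Sum>d\<in>{d. d dvd m \<and> d < m}. dconv (dpow one_fn k) (id_pow x) d)"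
    using fin by (simp add: divs_split[OF m])
  finally show ?thesis .
qed

lemma a_0: "m > 0 \<Longrightarrow> dconv (dpow one_fn 0) (id_pow x) m = id_pow x m"
  by (simp add: dconv_eps_left)

lemma series:
  "n > 0 \<Longrightarrow> summable (\<lambda>k. norm (dconv (dpow one_fn k) (id_pow x) n / 2 ^ (k + 1)))
     \<and> (\<lambda>k. dconv (dpow one_fn k) (id_pow x) n / 2 ^ (k + 1)) sums kappa x n"
proof (induction n rule: less_induct)
  case (less n)
  note n = less.prems
  define a where "a k m = dconv (dpow one_fn k) (id_pow x) m" for k m
  define D where "D = {d. d dvd n \<and> d < n}"
  have finD: "finite D" unfolding D_def by (rule finite_subset[OF _ fin_div[OF n]]) auto
  have IH: "summable (\<lambda>k. norm (a k d / 2 ^ (k + 1))) \<and> (\<lambda>k. a k d / 2 ^ (k + 1)) sums kappa x d"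
    if "d \<in> D" for d
    unfolding a_def using that n by (intro less.IH) (auto simp: D_def intro: gr0I)
  define b where "b k = a k n / 2 ^ (k + 1)" for k
  define c where "c k = (\<Sum>d\<in>D. a k d / 2 ^ (k + 1)) / 2" for k
  have rec: "b (Suc k) = b k / 2 + c k" for k
    unfolding b_def c_def a_def D_def
    using a_Suc[OF n, of k x] by (simp add: sum_divide_distrib[symmetric] add_divide_distrib)
  have c_sums: "c sums ((\<Sum>d\<in>D. kappa x d) / 2)"
    unfolding c_def by (intro sums_divide sums_sum) (use IH in blast)
  have c_summ: "summable (\<lambda>k. norm (c k))"
  proof (rule summable_comparison_test')
    show "summable (\<lambda>k. (\<Sum>d\<in>D. norm (a k d / 2 ^ (k + 1))) / 2)"
      by (intro summable_divide summable_sum) (use IH in blast)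
    fix k :: nat
    show "norm (norm (c k)) \<le> (\<Sum>d\<in>D. norm (a k d / 2 ^ (k + 1))) / 2"
      unfolding c_def using norm_sum[of "\<lambda>d. a k d / 2 ^ (k + 1)" D] by (simp add: norm_divide)
  qed
  define C where "C = (\<Sum>k. norm (c k))"
  have C0: "C \<ge> 0" unfolding C_def by (rule suminf_nonneg[OF c_summ]) simp
  have bound: "(\<Sum>k\<le>K. norm (b k)) \<le> 2 * (norm (b 0) + C)" for K
  proof (induction K)
    case 0 then show ?case using C0 by simp
  next
    case (Suc K)
    have "(\<Sum>k\<le>Suc K. norm (b k)) = norm (b 0) + (\<Sum>k\<le>K. norm (b (Suc k)))"
      by (rule sum.atMost_Suc_shift)
    also have "(\<Sum>k\<le>K. norm (b (Suc k))) \<le> (\<Sum>k\<le>K. norm (b k) / 2 + norm (c k))"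
      by (intro sum_mono) (simp add: rec norm_triangle_le norm_divide)
    also have "\<dots> = (\<Sum>k\<le>K. norm (b k)) / 2 + (\<Sum>k\<le>K. norm (c k))"
      by (simp add: sum.distrib sum_divide_distrib)
    also have "(\<Sum>k\<le>K. norm (c k)) \<le> C"
      unfolding C_def by (rule sum_le_suminf[OF c_summ]) auto
    finally show ?case using Suc.IH by simp
  qed
  have b_summ: "summable (\<lambda>k. norm (b k))"
    by (rule bounded_imp_summable[OF _ bound]) simp
  then have "summable b" by (rule summable_norm_cancel)
  then have bs: "b sums (suminf b)" by (rule summable_sums)
  define s where "s = suminf b"
  have "(\<lambda>k. b (Suc k)) sums (s - b 0)"
    using bs by (simp add: sums_Suc_iff s_def)
  moreover have "(\<lambda>k. b (Suc k)) sums (s / 2 + (\<Sum>d\<in>D. kappa x d) / 2)"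
    unfolding rec by (intro sums_add sums_divide c_sums) (use bs s_def in simp)
  ultimately have "s - b 0 = s / 2 + (\<Sum>d\<in>D. kappa x d) / 2" by (rule sums_unique2)
  then have "s = 2 * b 0 + (\<Sum>d\<in>D. kappa x d)" by (simp add: field_simps)
  also have "\<dots> = kappa x n"
    using n by (simp add: b_def a_def dconv_eps_left D_def kappa.simps[of x n]) (simp add: id_pow_def)
  finally have "b sums kappa x n" using bs s_def by simp
  then show ?case using b_summ unfolding b_def a_def by simp
qed

theorem theorem2:
  fixes x y :: complex
  shows "(\<forall>n>0. dconv (kappa x) (sigma y) n = dconv (kappa y) (sigma x) n)
       \<and> (\<forall>n>0. kappa x n = (id_pow x n + dconv one_fn (kappa x) n) / 2)
       \<and> (\<forall>n>0. (\<lambda>k. dconv (dpow one_fn k) (id_pow x) n / 2 ^ (k + 1)) sums kappa x n)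
       \<and> (\<forall>n>0. kappa x n = dconv (jordan x) (kappa 0) n)
       \<and> (\<forall>n>0. dinv (kappa x) n = dconv (dinv (jordan x)) (\<lambda>m. 2 * mu m - eps m) n)
       \<and> (\<forall>n>0. sigma x n = dconv (kappa x) (\<lambda>m. 2 * one_fn m - sigma 0 m) n)"
proof (intro conjI allI impI)
  fix n :: nat assume n: "n > 0"
  show "dconv (kappa x) (sigma y) n = dconv (kappa y) (sigma x) n" by (rule item1[OF n])
  show "kappa x n = (id_pow x n + dconv one_fn (kappa x) n) / 2" by (rule item2[OF n])
  show "(\<lambda>k. dconv (dpow one_fn k) (id_pow x) n / 2 ^ (k + 1)) sums kappa x n"
    using series[OF n, of x] by (rule conjunct2)
  show "kappa x n = dconv (jordan x) (kappa 0) n" by (rule item4[OF n])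
  show "dinv (kappa x) n = dconv (dinv (jordan x)) (\<lambda>m. 2 * mu m - eps m) n" by (rule item5[OF n])
  show "sigma x n = dconv (kappa x) (\<lambda>m. 2 * one_fn m - sigma 0 m) n" by (rule item6[OF n])
qed

end
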